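(* Let $r,k,s_1,\dots,s_k$ be nonnegative integers and $\Gamma$ the complete bipartite supernova quiver with these parameters. Let $\mathbf{v}\in\mathbb{Z}_{\ge0}^I$. If $\mathbf{v}\in\Phi(\Gamma)$ and $v_{(i;0)}>0$ for some $i\in\{1,\dots,k\}$, then $v_{(i;0)}\ge v_{(i;1)}\ge v_{(i;2)}\ge\cdots\ge v_{(i;s_i)}$.
   Context: $\Gamma$ has vertex set $I$ consisting of $(l)$, $l=1,\dots,r$, and $(i;j)$, $i=1,\dots,k$, $j=0,\dots,s_i$; arrows: one arrow $(l)\to(i;0)$ for every $l,i$, and one arrow $(i;j)\to(i;j-1)$ for $1\le j\le s_i$. $\Phi(\Gamma)\subset\mathbb{Z}^I$ is the root system of $\Gamma$: with the bilinear form $(\mathbf{e}_a,\mathbf{e}_a)=2$, $(\mathbf{e}_a,\mathbf{e}_b)=-$(number of edges joining $a,b$) for $a\ne b$, and the Weyl group $W$ generated by $s_a(\lambda)=\lambda-(\lambda,\mathbf{e}_a)\mathbf{e}_a$, the real roots are the $w(\mathbf{e}_a)$, and the imaginary roots are $\pm w(\delta)$ with $w\in W$ and $\delta$ a nonzero vector in $\mathbb{Z}_{\ge0}^I$ with connected support and $(\mathbf{e}_a,\delta)\le0$ for all $a$. *)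

theory Defs
  imports Main
begin

text \<open>Vertices of the complete bipartite supernova quiver: L l is the vertex (l),
  C i j is the vertex (i;j).\<close>
datatype vtx = L nat | C nat nat

definition verts :: "nat \<Rightarrow> nat \<Rightarrow> (nat \<Rightarrow> nat) \<Rightarrow> vtx set" where
  "verts r k s = {L l | l. 1 \<le> l \<and> l \<le> r} \<union> {C i j | i j. 1 \<le> i \<and> i \<le> k \<and> j \<le> s i}"

definition arrow :: "nat \<Rightarrow> nat \<Rightarrow> (nat \<Rightarrow> nat) \<Rightarrow> vtx \<Rightarrow> vtx \<Rightarrow> bool" where
  "arrow r k s a b \<longleftrightarrow>
     (\<exists>l i. a = L l \<and> b = C i 0 \<and> 1 \<le> l \<and> l \<le> r \<and> 1 \<le> i \<and> i \<le> k) \<or>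
     (\<exists>i j. a = C i j \<and> b = C i (j - 1) \<and> 1 \<le> i \<and> i \<le> k \<and> 1 \<le> j \<and> j \<le> s i)"

definition nedges :: "nat \<Rightarrow> nat \<Rightarrow> (nat \<Rightarrow> nat) \<Rightarrow> vtx \<Rightarrow> vtx \<Rightarrow> nat" where
  "nedges r k s a b = (if a = b then 0 else
     (if arrow r k s a b then 1 else 0) + (if arrow r k s b a then 1 else 0))"

definition cform :: "nat \<Rightarrow> nat \<Rightarrow> (nat \<Rightarrow> nat) \<Rightarrow> vtx \<Rightarrow> vtx \<Rightarrow> int" where
  "cform r k s a b = (if a = b then 2 else - int (nedges r k s a b))"

text \<open>Vectors in Z^I are functions vtx \<Rightarrow> int (relevant only on verts).\<close>
definition bform :: "nat \<Rightarrow> nat \<Rightarrow> (nat \<Rightarrow> nat) \<Rightarrow> (vtx \<Rightarrow> int) \<Rightarrow> (vtx \<Rightarrow> int) \<Rightarrow> int" where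
  "bform r k s x y = (\<Sum>a\<in>verts r k s. \<Sum>b\<in>verts r k s. x a * y b * cform r k s a b)"

definition evec :: "vtx \<Rightarrow> vtx \<Rightarrow> int" where
  "evec a = (\<lambda>b. if b = a then 1 else 0)"

definition srefl :: "nat \<Rightarrow> nat \<Rightarrow> (nat \<Rightarrow> nat) \<Rightarrow> vtx \<Rightarrow> (vtx \<Rightarrow> int) \<Rightarrow> (vtx \<Rightarrow> int)" where
  "srefl r k s a x = (\<lambda>b. x b - bform r k s x (evec a) * evec a b)"

text \<open>W-orbit of x: the set of w(x), w in the Weyl group generated by the
  simple reflections (which are involutions, so the generated monoid is the group).\<close>
inductive_set weyl_orbit :: "nat \<Rightarrow> nat \<Rightarrow> (nat \<Rightarrow> nat) \<Rightarrow> (vtx \<Rightarrow> int) \<Rightarrow> (vtx \<Rightarrow> int) set"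
  for r k s x where
  base: "x \<in> weyl_orbit r k s x"
| step: "y \<in> weyl_orbit r k s x \<Longrightarrow> a \<in> verts r k s \<Longrightarrow> srefl r k s a y \<in> weyl_orbit r k s x"

definition real_roots :: "nat \<Rightarrow> nat \<Rightarrow> (nat \<Rightarrow> nat) \<Rightarrow> (vtx \<Rightarrow> int) set" where
  "real_roots r k s = (\<Union>a\<in>verts r k s. weyl_orbit r k s (evec a))"

definition connected_support :: "nat \<Rightarrow> nat \<Rightarrow> (nat \<Rightarrow> nat) \<Rightarrow> (vtx \<Rightarrow> int) \<Rightarrow> bool" where
  "connected_support r k s d \<longleftrightarrow>
     (\<forall>a b. d a \<noteq> 0 \<longrightarrow> d b \<noteq> 0 \<longrightarrow>
        (\<lambda>x y. d x \<noteq> 0 \<and> d y \<noteq> 0 \<and> nedges r k s x y > 0)\<^sup>*\<^sup>* a b)"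

definition fundamental_imag :: "nat \<Rightarrow> nat \<Rightarrow> (nat \<Rightarrow> nat) \<Rightarrow> (vtx \<Rightarrow> int) \<Rightarrow> bool" where
  "fundamental_imag r k s d \<longleftrightarrow>
     (\<forall>a. 0 \<le> d a) \<and> (\<forall>a. a \<notin> verts r k s \<longrightarrow> d a = 0) \<and> (\<exists>a. d a \<noteq> 0) \<and>
     connected_support r k s d \<and>
     (\<forall>a\<in>verts r k s. bform r k s (evec a) d \<le> 0)"

definition imag_roots :: "nat \<Rightarrow> nat \<Rightarrow> (nat \<Rightarrow> nat) \<Rightarrow> (vtx \<Rightarrow> int) set" where
  "imag_roots r k s = {y. \<exists>d. fundamental_imag r k s d \<and>
      (y \<in> weyl_orbit r k s d \<or> (\<lambda>b. - y b) \<in> weyl_orbit r k s d)}"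

definition roots :: "nat \<Rightarrow> nat \<Rightarrow> (nat \<Rightarrow> nat) \<Rightarrow> (vtx \<Rightarrow> int) set" where
  "roots r k s = real_roots r k s \<union> imag_roots r k s"

end

theory Submission
  imports Defs
begin

lemma finite_verts: "finite (verts r k s)"
proof -
  have "verts r k s \<subseteq> L ` {1..r} \<union> (\<lambda>(i,j). C i j) ` (SIGMA i:{1..k}. {0..s i})"
    unfolding verts_def by force
  moreover have "finite (L ` {1..r} \<union> (\<lambda>(i,j). C i j) ` (SIGMA i:{1..k}. {0..s i}))" by auto
  ultimately show ?thesis by (rule finite_subset)
qed

lemma not_both_arrows: "\<not> (arrow r k s a b \<and> arrow r k s b a)"
  unfolding arrow_def by auto

lemma nedges_sym: "nedges r k s a b = nedges r k s b a"
  unfolding nedges_def by auto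

lemma cform_sym: "cform r k s a b = cform r k s b a"
  unfolding cform_def using nedges_sym by metis

lemma cform_vals: "a \<noteq> b \<Longrightarrow> cform r k s a b = 0 \<or> cform r k s a b = -1"
  unfolding cform_def nedges_def using not_both_arrows[of r k s a b] by auto

lemma bform_sym: "bform r k s x y = bform r k s y x"
  unfolding bform_def
  apply (subst sum.swap)
  apply (intro sum.cong refl)
  by (simp add: cform_sym mult.commute mult.left_commute)

lemma sum_delta_mult: "finite A \<Longrightarrow> (\<Sum>b\<in>A. f b * (if b = a then 1 else 0) * g b) = (if a \<in> A then f a * g a else (0::int))"
proof -
  assume "finite A"
  have "(\<Sum>b\<in>A. f b * (if b = a then 1 else 0) * g b) = (\<Sum>b\<in>A. if b = a then f a * g a else 0)"
    by (intro sum.cong) auto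
  thus ?thesis using \<open>finite A\<close> by (simp add: sum.delta)
qed

lemma P_formula: "a \<in> verts r k s \<Longrightarrow> bform r k s x (evec a) = (\<Sum>c\<in>verts r k s. x c * cform r k s c a)"
  unfolding bform_def evec_def
  by (intro sum.cong refl) (simp add: sum_delta_mult[OF finite_verts])

lemma P_outside: "a \<notin> verts r k s \<Longrightarrow> bform r k s x (evec a) = 0"
  unfolding bform_def evec_def by (simp add: sum_delta_mult[OF finite_verts])

lemma P_add: "bform r k s (\<lambda>v. x v + y v) (evec a) = bform r k s x (evec a) + bform r k s y (evec a)"
  by (cases "a \<in> verts r k s") (simp_all add: P_formula P_outside sum.distrib algebra_simps)

lemma P_smult: "bform r k s (\<lambda>v. c * x v) (evec a) = c * bform r k s x (evec a)"
  by (cases "a \<in> verts r k s") (simp_all add: P_formula P_outside sum_distrib_left algebra_simps)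

lemma P_diff: "bform r k s (\<lambda>v. x v - y v) (evec a) = bform r k s x (evec a) - bform r k s y (evec a)"
  by (cases "a \<in> verts r k s") (simp_all add: P_formula P_outside sum_subtractf algebra_simps)

lemma P_evec: "a \<in> verts r k s \<Longrightarrow> b \<in> verts r k s \<Longrightarrow> bform r k s (evec b) (evec a) = cform r k s b a"
proof -
  assume a: "a \<in> verts r k s" and b: "b \<in> verts r k s"
  have "bform r k s (evec b) (evec a) = (\<Sum>c\<in>verts r k s. if c = b then cform r k s b a else 0)"
    unfolding P_formula[OF a] by (intro sum.cong) (auto simp: evec_def)
  thus ?thesis using b finite_verts by (simp add: sum.delta)
qed

lemma P_evec_self: "a \<in> verts r k s \<Longrightarrow> bform r k s (evec a) (evec a) = 2"
  by (simp add: P_evec cform_def)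

lemma P_srefl: "bform r k s (srefl r k s b x) (evec a) = bform r k s x (evec a) - bform r k s x (evec b) * bform r k s (evec b) (evec a)"
  unfolding srefl_def by (simp add: P_diff P_smult)

lemma cform_self[simp]: "cform r k s a a = 2"
  unfolding cform_def by simp

lemma evec_app: "evec a v = (if v = a then 1 else 0)"
  unfolding evec_def by simp

lemma srefl_app: "srefl r k s a x v = x v - bform r k s x (evec a) * evec a v"
  unfolding srefl_def by simp

lemma srefl_invol: "a \<in> verts r k s \<Longrightarrow> srefl r k s a (srefl r k s a x) = x"
  by (rule ext) (simp add: srefl_app P_srefl P_evec_self evec_app)

lemma srefl_comm: "a \<in> verts r k s \<Longrightarrow> b \<in> verts r k s \<Longrightarrow> cform r k s a b = 0 \<Longrightarrow>
   srefl r k s a (srefl r k s b x) = srefl r k s b (srefl r k s a x)"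
  by (rule ext) (simp add: srefl_app P_srefl P_evec cform_sym[of r k s b a] algebra_simps)

lemma srefl_braid: "a \<in> verts r k s \<Longrightarrow> b \<in> verts r k s \<Longrightarrow> cform r k s a b = -1 \<Longrightarrow>
   srefl r k s a (srefl r k s b (srefl r k s a x)) = srefl r k s b (srefl r k s a (srefl r k s b x))"
  by (rule ext) (simp add: srefl_app P_srefl P_evec cform_sym[of r k s b a] P_evec_self algebra_simps evec_app)


fun act :: "nat \<Rightarrow> nat \<Rightarrow> (nat \<Rightarrow> nat) \<Rightarrow> vtx list \<Rightarrow> (vtx \<Rightarrow> int) \<Rightarrow> (vtx \<Rightarrow> int)" where
  "act r k s [] x = x"
| "act r k s (a # w) x = srefl r k s a (act r k s w x)"

definition len :: "nat \<Rightarrow> nat \<Rightarrow> (nat \<Rightarrow> nat) \<Rightarrow> ((vtx \<Rightarrow> int) \<Rightarrow> (vtx \<Rightarrow> int)) \<Rightarrow> nat" where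
  "len r k s f = (LEAST n. \<exists>w. set w \<subseteq> verts r k s \<and> length w = n \<and> act r k s w = f)"

lemma act_append: "act r k s (w1 @ w2) x = act r k s w1 (act r k s w2 x)"
  by (induction w1) auto

lemma act_append_fun: "act r k s (w1 @ w2) = act r k s w1 \<circ> act r k s w2"
  by (rule ext) (simp add: act_append)

lemma act_prefix_eq: "act r k s p = act r k s q \<Longrightarrow> act r k s (p @ t) = act r k s (q @ t)"
  by (simp add: act_append_fun)

lemma len_le: "set w \<subseteq> verts r k s \<Longrightarrow> len r k s (act r k s w) \<le> length w"
  unfolding len_def by (rule Least_le) auto

lemma len_rep: "set w \<subseteq> verts r k s \<Longrightarrow> \<exists>w'. set w' \<subseteq> verts r k s \<and> length w' = len r k s (act r k s w) \<and> act r k s w' = act r k s w"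
  unfolding len_def by (rule LeastI_ex) auto

lemma srefl_add: "srefl r k s a (\<lambda>v. x v + y v) = (\<lambda>v. srefl r k s a x v + srefl r k s a y v)"
  by (rule ext) (simp add: srefl_app P_add algebra_simps)

lemma srefl_smult: "srefl r k s a (\<lambda>v. c * x v) = (\<lambda>v. c * srefl r k s a x v)"
  by (rule ext) (simp add: srefl_app P_smult algebra_simps)

lemma act_add: "act r k s w (\<lambda>v. x v + y v) = (\<lambda>v. act r k s w x v + act r k s w y v)"
  by (induction w) (simp_all add: srefl_add)

lemma act_smult: "act r k s w (\<lambda>v. c * x v) = (\<lambda>v. c * act r k s w x v)"
  by (induction w) (simp_all add: srefl_smult)

lemma act_neg: "act r k s w (\<lambda>v. - x v) = (\<lambda>v. - act r k s w x v)"
  using act_smult[of r k s w "-1" x] by simp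

lemma act_diff: "act r k s w (\<lambda>v. x v - y v) = (\<lambda>v. act r k s w x v - act r k s w y v)"
  using act_add[of r k s w x "\<lambda>v. - y v"] act_neg[of r k s w y] by simp

lemma act_cancel: "a \<in> verts r k s \<Longrightarrow> act r k s (p @ a # a # q) = act r k s (p @ q)"
  by (rule ext) (simp add: act_append srefl_invol)

lemma act_comm: "a \<in> verts r k s \<Longrightarrow> b \<in> verts r k s \<Longrightarrow> cform r k s a b = 0 \<Longrightarrow>
   act r k s (p @ a # b # q) = act r k s (p @ b # a # q)"
  by (rule ext) (simp add: act_append srefl_comm[of a r k s b])

lemma act_braid: "a \<in> verts r k s \<Longrightarrow> b \<in> verts r k s \<Longrightarrow> cform r k s a b = -1 \<Longrightarrow>
   act r k s (p @ a # b # a # q) = act r k s (p @ b # a # b # q)"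
  by (rule ext) (simp add: act_append srefl_braid[of a r k s b])


lemma nonneg_add: "(\<forall>v. 0 \<le> x v) \<Longrightarrow> (\<forall>v. 0 \<le> y v) \<Longrightarrow> \<forall>v. (0::int) \<le> x v + y v"
  by (simp add: add_nonneg_nonneg)

context
  fixes r k :: nat and s :: "nat \<Rightarrow> nat"
begin

abbreviation "VV \<equiv> verts r k s"
abbreviation "Ac \<equiv> act r k s"
abbreviation "Ln \<equiv> len r k s"

lemma T_main:
  "\<forall>w a. set w \<subseteq> VV \<longrightarrow> a \<in> VV \<longrightarrow> Ln (Ac w) = n \<longrightarrow> n \<le> Ln (Ac (w @ [a]))
      \<longrightarrow> (\<forall>v. 0 \<le> Ac w (evec a) v)"
proof (induction n rule: less_induct)
  case (less n)
  show ?case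
  proof (rule allI, rule allI, intro impI)
    fix w a assume w: "set w \<subseteq> VV" and a: "a \<in> VV" and ln: "Ln (Ac w) = n"
      and ge: "n \<le> Ln (Ac (w @ [a]))"
    obtain w0 where w0: "set w0 \<subseteq> VV" "length w0 = n" "Ac w0 = Ac w"
      using len_rep[OF w] ln by auto
    have wa_eq: "Ac (w @ [a]) = Ac (w0 @ [a])" using w0(3) by (simp add: act_append_fun)
    show "\<forall>v. 0 \<le> Ac w (evec a) v"
    proof (cases "w0 = []")
      case True
      then show ?thesis using w0(3)[symmetric] by (auto simp: evec_app)
    next
      case False
      then obtain w1 b where w1b: "w0 = w1 @ [b]" by (metis rev_exhaust)
      have w1: "set w1 \<subseteq> VV" and b: "b \<in> VV" using w0(1) w1b by auto
      have n1: "length w1 = n - 1" "n \<ge> 1" using w0(2) w1b by auto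
      have "b \<noteq> a"
      proof
        assume "b = a"
        then have "Ac (w @ [a]) = Ac w1" using wa_eq w1b act_cancel[OF a, of w1 "[]"] by simp
        then have "Ln (Ac (w @ [a])) \<le> n - 1" using len_le[OF w1] n1 by simp
        then show False using ge n1 by simp
      qed
      define Pr where "Pr = (\<lambda>(v::vtx list, u::vtx list). set v \<subseteq> VV \<and> set u \<subseteq> {a, b} \<and>
          Ac (v @ u) = Ac w \<and> length v + length u = n)"
      have "Pr (w1, [b])" unfolding Pr_def using w1 w1b w0 by auto
      then obtain vu where vu: "Pr vu" and vumin: "\<forall>y. Pr y \<longrightarrow> length (fst vu) \<le> length (fst y)"
        using ex_has_least_nat[of Pr "(w1, [b])" "\<lambda>p. length (fst p)"] by blast
      obtain v u where vudef: "vu = (v, u)" by fastforce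
      have v: "set v \<subseteq> VV" and u: "set u \<subseteq> {a, b}" and vuw: "Ac (v @ u) = Ac w"
        and vul: "length v + length u = n" using vu vudef unfolding Pr_def by auto
      have uV: "set u \<subseteq> VV" using u a b by auto
      have min: "\<And>v' u'. Pr (v', u') \<Longrightarrow> length v \<le> length v'" using vumin vudef by force
      have vlt: "length v < n" using min[of w1 "[b]"] \<open>Pr (w1, [b])\<close> n1 by simp
      have lenw_le: "\<And>w'. set w' \<subseteq> VV \<Longrightarrow> Ac w' = Ac w \<Longrightarrow> n \<le> length w'"
        using len_le ln by metis
      have lenv: "Ln (Ac v) = length v"
      proof -
        obtain v' where v': "set v' \<subseteq> VV" "length v' = Ln (Ac v)" "Ac v' = Ac v"
          using len_rep[OF v] by auto
        have "Ac (v' @ u) = Ac w" using v'(3) vuw by (simp add: act_append_fun)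
        then have "n \<le> length v' + length u" using lenw_le[of "v' @ u"] v'(1) uV by simp
        then show ?thesis using v' vul len_le[OF v] by simp
      qed
      have claim: "Ln (Ac v) \<le> Ln (Ac (v @ [c]))" if c: "c \<in> {a, b}" for c
      proof (rule ccontr)
        assume "\<not> ?thesis"
        then have lt: "Ln (Ac (v @ [c])) < length v" using lenv by simp
        have cV: "c \<in> VV" using c a b by auto
        obtain v' where v': "set v' \<subseteq> VV" "length v' = Ln (Ac (v @ [c]))" "Ac v' = Ac (v @ [c])"
          using len_rep[where w="v @ [c]" and r=r and k=k and s=s] v cV by auto
        have e: "Ac (v' @ c # u) = Ac w"
        proof -
          have "Ac (v' @ c # u) = Ac (v' @ [c] @ u)" by simp
          also have "\<dots> = Ac (v @ [c] @ [c] @ u)"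
          proof -
            have v'x: "\<And>y. Ac v' y = Ac v (srefl r k s c y)" using v'(3) by (simp add: act_append)
            show ?thesis by (rule ext) (simp add: act_append v'x)
          qed
          also have "\<dots> = Ac (v @ u)" using act_cancel[OF cV, of v u] by simp
          finally show ?thesis using vuw by simp
        qed
        have "n \<le> length (v' @ c # u)" using lenw_le[OF _ e] v'(1) cV uV by simp
        then have "Pr (v', c # u)" unfolding Pr_def using v'(1) u c e lt v'(2) vul by auto
        then have "length v \<le> length v'" by (rule min)
        then show False using lt v'(2) by simp
      qed
      have IHa: "\<forall>x. 0 \<le> Ac v (evec a) x" and IHb: "\<forall>x. 0 \<le> Ac v (evec b) x"
        using less.IH[OF vlt] v a b lenv claim by auto
      have F1: "\<not> (\<exists>p. u = p @ [a])"
      proof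
        assume "\<exists>p. u = p @ [a]"
        then obtain p where p: "u = p @ [a]" by blast
        have "Ac (w @ [a]) = Ac (v @ u @ [a])" using act_prefix_eq[OF vuw[symmetric], of "[a]"] by simp
        also have "\<dots> = Ac ((v @ p) @ a # a # [])" using p by simp
        also have "\<dots> = Ac (v @ p)" using act_cancel[OF a, of "v @ p" "[]"] by simp
        finally have "Ln (Ac (w @ [a])) \<le> length (v @ p)" using len_le[of "v @ p"] v p uV by auto
        then show False using ge vul p by simp
      qed
      have F2: "\<not> (\<exists>p q c. u = p @ c # c # q)"
      proof
        assume "\<exists>p q c. u = p @ c # c # q"
        then obtain p q c where p: "u = p @ c # c # q" by blast
        have cV: "c \<in> VV" using p uV by auto
        have "Ac w = Ac ((v @ p) @ c # c # q)" using vuw p by simp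
        also have "\<dots> = Ac ((v @ p) @ q)" by (rule act_cancel[OF cV])
        finally have "n \<le> length ((v @ p) @ q)" using lenw_le[of "(v @ p) @ q"] v p uV by auto
        then show False using vul p by simp
      qed
      have F3: "\<not> (\<exists>p. u = p @ [a, b])" if c0: "cform r k s a b = 0"
      proof
        assume "\<exists>p. u = p @ [a, b]"
        then obtain p where p: "u = p @ [a, b]" by blast
        have "Ac (w @ [a]) = Ac (v @ u @ [a])" using act_prefix_eq[OF vuw[symmetric], of "[a]"] by simp
        also have "\<dots> = Ac ((v @ p) @ a # b # [a])" using p by simp
        also have "\<dots> = Ac ((v @ p) @ b # a # [a])" by (rule act_comm[OF a b c0])
        also have "\<dots> = Ac ((v @ p @ [b]) @ a # a # [])" by simp
        also have "\<dots> = Ac (v @ p @ [b])" using act_cancel[OF a, of "v @ p @ [b]" "[]"] by simp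
        finally have "Ln (Ac (w @ [a])) \<le> length (v @ p @ [b])" using len_le[of "v @ p @ [b]"] v p uV b by auto
        then show False using ge vul p by simp
      qed
      have F4: "\<not> (\<exists>p. u = p @ [b, a, b])" if c1: "cform r k s a b = -1"
      proof
        assume "\<exists>p. u = p @ [b, a, b]"
        then obtain p where p: "u = p @ [b, a, b]" by blast
        have c1': "cform r k s b a = -1" using c1 cform_sym by metis
        have "Ac (w @ [a]) = Ac (v @ u @ [a])" using act_prefix_eq[OF vuw[symmetric], of "[a]"] by simp
        also have "\<dots> = Ac ((v @ p) @ b # a # b # [a])" using p by simp
        also have "\<dots> = Ac ((v @ p) @ a # b # a # [a])" by (rule act_braid[OF b a c1'])
        also have "\<dots> = Ac ((v @ p @ [a, b]) @ a # a # [])" by simp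
        also have "\<dots> = Ac (v @ p @ [a, b])" using act_cancel[OF a, of "v @ p @ [a, b]" "[]"] by simp
        finally have "Ln (Ac (w @ [a])) \<le> length (v @ p @ [a, b])" using len_le[of "v @ p @ [a, b]"] v p uV a b by auto
        then show False using ge vul p by simp
      qed
      have cab: "cform r k s a b = 0 \<or> cform r k s a b = -1" using cform_vals \<open>b \<noteq> a\<close> by metis
      have ucases: "u = [] \<or> u = [b] \<or> (u = [a, b] \<and> cform r k s a b = -1)"
      proof (cases u rule: rev_exhaust)
        case Nil then show ?thesis by simp
      next
        case (snoc u1 x)
        have xb: "x = b" using F1 snoc u by auto
        show ?thesis
        proof (cases u1 rule: rev_exhaust)
          case Nil then show ?thesis using snoc xb by simp
        next
          case (snoc u2 y)
          have y: "y \<in> {a, b}" using u snoc \<open>u = u1 @ [x]\<close> by auto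
          have ya: "y = a" using F2 snoc \<open>u = u1 @ [x]\<close> xb y by auto
          have c1: "cform r k s a b = -1" using F3 cab snoc \<open>u = u1 @ [x]\<close> xb ya by auto
          show ?thesis
          proof (cases u2 rule: rev_exhaust)
            case Nil then show ?thesis using snoc \<open>u = u1 @ [x]\<close> xb ya c1 by simp
          next
            case (snoc u3 z)
            have z: "z \<in> {a, b}" using u snoc \<open>u1 = u2 @ [y]\<close> \<open>u = u1 @ [x]\<close> by auto
            show ?thesis
            proof (cases "z = a")
              case True
              then have "u = u3 @ a # a # [b]" using snoc \<open>u1 = u2 @ [y]\<close> \<open>u = u1 @ [x]\<close> xb ya by simp
              then show ?thesis using F2 by blast
            next
              case False
              then have "u = u3 @ [b, a, b]" using z snoc \<open>u1 = u2 @ [y]\<close> \<open>u = u1 @ [x]\<close> xb ya by simp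
              then show ?thesis using F4[OF c1] by blast
            qed
          qed
        qed
      qed
      have wa: "Ac w (evec a) = Ac v (Ac u (evec a))" using vuw act_append[of r k s v u] by metis
      have ca: "cform r k s b a = cform r k s a b" using cform_sym by metis
      show ?thesis
      proof -
        consider "u = []" | "u = [b]" | "u = [a, b]" "cform r k s a b = -1" using ucases by blast
        then show ?thesis
        proof cases
          case 1 then show ?thesis using wa IHa by simp
        next
          case 2
          have "Ac u (evec a) = (\<lambda>x. evec a x + (- cform r k s a b) * evec b x)"
            using 2 by (auto simp: srefl_app P_evec a b intro!: ext)
          then have "Ac w (evec a) = (\<lambda>x. Ac v (evec a) x + (- cform r k s a b) * Ac v (evec b) x)"
            using wa by (simp add: act_diff act_smult)
          moreover have "- cform r k s a b \<ge> 0" using cab by auto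
          ultimately show ?thesis using IHa IHb
            by (smt (verit, best) mult_nonneg_nonneg)
        next
          case 3
          have "Ac u (evec a) = evec b"
            using 3 by (auto simp: srefl_app P_srefl P_evec a b ca P_evec_self evec_app intro!: ext)
          then show ?thesis using wa IHb by simp
        qed
      qed
    qed
  qed
qed

end


lemma srefl_self_neg: "a \<in> verts r k s \<Longrightarrow> srefl r k s a (evec a) = (\<lambda>v. - evec a v)"
  by (rule ext) (simp add: srefl_app P_evec_self evec_app)

lemma real_pos:
  assumes w: "set w \<subseteq> verts r k s" and a: "a \<in> verts r k s"
  shows "(\<forall>v. 0 \<le> act r k s w (evec a) v) \<or> (\<forall>v. act r k s w (evec a) v \<le> 0)"
proof (cases "len r k s (act r k s w) \<le> len r k s (act r k s (w @ [a]))")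
  case True
  then show ?thesis using T_main[of r k s "len r k s (act r k s w)"] w a by blast
next
  case False
  have "act r k s ((w @ [a]) @ [a]) = act r k s w"
    using act_cancel[OF a, of w "[]"] by simp
  then have "len r k s (act r k s (w @ [a])) \<le> len r k s (act r k s ((w @ [a]) @ [a]))" using False by simp
  then have "\<forall>v. 0 \<le> act r k s (w @ [a]) (evec a) v"
    using T_main[of r k s "len r k s (act r k s (w @ [a]))"] w a by auto
  then have "\<forall>v. 0 \<le> - act r k s w (evec a) v"
    by (simp add: act_append srefl_self_neg[OF a] act_neg)
  then show ?thesis by auto
qed

lemma len_snoc: "set w \<subseteq> verts r k s \<Longrightarrow> a \<in> verts r k s \<Longrightarrow>
   len r k s (act r k s (w @ [a])) \<le> len r k s (act r k s w) + 1"
proof -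
  assume w: "set w \<subseteq> verts r k s" and a: "a \<in> verts r k s"
  obtain w' where w': "set w' \<subseteq> verts r k s" "length w' = len r k s (act r k s w)" "act r k s w' = act r k s w"
    using len_rep[OF w] by auto
  have "act r k s (w' @ [a]) = act r k s (w @ [a])" using act_prefix_eq[OF w'(3)] by simp
  then show ?thesis using len_le[of "w' @ [a]" r k s] w' a by simp
qed

lemma imag_pos_reduced:
  assumes d: "\<forall>c\<in>verts r k s. bform r k s d (evec c) \<le> 0"
  shows "set w \<subseteq> verts r k s \<Longrightarrow> length w = len r k s (act r k s w) \<Longrightarrow> \<forall>v. d v \<le> act r k s w d v"
proof (induction w rule: rev_induct)
  case Nil then show ?case by simp
next
  case (snoc a w1)
  have w1: "set w1 \<subseteq> verts r k s" and a: "a \<in> verts r k s" using snoc.prems by auto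
  have l1: "len r k s (act r k s w1) \<le> length w1" using len_le[OF w1] .
  have l2: "len r k s (act r k s (w1 @ [a])) \<le> len r k s (act r k s w1) + 1" using len_snoc[OF w1 a] .
  have eq: "len r k s (act r k s w1) = length w1" using l1 l2 snoc.prems(2) by simp
  have ge: "len r k s (act r k s w1) \<le> len r k s (act r k s (w1 @ [a]))" using eq snoc.prems(2) by simp
  have pa: "\<forall>v. 0 \<le> act r k s w1 (evec a) v"
    using T_main[of r k s "len r k s (act r k s w1)"] w1 a ge by blast
  have IH: "\<forall>v. d v \<le> act r k s w1 d v" using snoc.IH w1 eq by simp
  have "act r k s (w1 @ [a]) d = (\<lambda>v. act r k s w1 d v - bform r k s d (evec a) * act r k s w1 (evec a) v)"
    by (simp add: act_append srefl_def act_diff act_smult)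
  moreover have "bform r k s d (evec a) \<le> 0" using d a by auto
  ultimately show ?case using IH pa
    by (smt (verit, best) mult_nonpos_nonneg)
qed

lemma imag_pos:
  assumes d: "\<forall>c\<in>verts r k s. bform r k s d (evec c) \<le> 0" and dn: "\<forall>v. 0 \<le> d v"
    and w: "set w \<subseteq> verts r k s"
  shows "\<forall>v. 0 \<le> act r k s w d v"
proof -
  obtain w' where w': "set w' \<subseteq> verts r k s" "length w' = len r k s (act r k s w)" "act r k s w' = act r k s w"
    using len_rep[OF w] by auto
  have "\<forall>v. d v \<le> act r k s w' d v" using imag_pos_reduced[OF d w'(1)] w' by simp
  then show ?thesis using w'(3) dn by (metis order_trans)
qed

lemma orbit_act: "y \<in> weyl_orbit r k s x \<Longrightarrow> \<exists>w. set w \<subseteq> verts r k s \<and> y = act r k s w x"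
proof (induction rule: weyl_orbit.induct)
  case base
  then show ?case by (rule exI[of _ "[]"]) simp
next
  case (step y a)
  then obtain w where "set w \<subseteq> verts r k s" "y = act r k s w x" by blast
  then show ?case using step by (intro exI[of _ "a # w"]) simp
qed


lemma cform_arm:
  assumes "1 \<le> i" "i \<le> k" "1 \<le> j" "j \<le> s i"
  shows "cform r k s c (C i j) = (if c = C i j then 2 else 0) + (if c = C i (j - 1) then -1 else 0)
     + (if c = C i (j + 1) \<and> j + 1 \<le> s i then -1 else 0)"
  using assms unfolding cform_def nedges_def arrow_def by (auto; presburger)

lemma sum_delta_int: "finite A \<Longrightarrow> (\<Sum>c\<in>A. x c * (if c = t then K else 0)) = (if t \<in> A then x t * (K::int) else 0)"
proof -
  assume "finite A"
  have "(\<Sum>c\<in>A. x c * (if c = t then K else 0)) = (\<Sum>c\<in>A. if c = t then x t * K else 0)"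
    by (intro sum.cong) auto
  then show ?thesis using \<open>finite A\<close> by (simp add: sum.delta)
qed

lemma P_arm:
  assumes "1 \<le> i" "i \<le> k" "1 \<le> j" "j \<le> s i"
  shows "bform r k s x (evec (C i j)) = 2 * x (C i j) - x (C i (j - 1)) - (if j + 1 \<le> s i then x (C i (j + 1)) else 0)"
proof -
  have V1: "C i j \<in> verts r k s" "C i (j - 1) \<in> verts r k s" using assms unfolding verts_def by auto
  have V2: "C i (j + 1) \<in> verts r k s \<longleftrightarrow> j + 1 \<le> s i" using assms unfolding verts_def by auto
  have "bform r k s x (evec (C i j)) = (\<Sum>c\<in>verts r k s. x c * cform r k s c (C i j))"
    using P_formula V1 by blast
  also have "\<dots> = (\<Sum>c\<in>verts r k s. x c * (if c = C i j then 2 else 0) + x c * (if c = C i (j - 1) then -1 else 0)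
     + x c * (if c = C i (j + 1) then (if j + 1 \<le> s i then -1 else 0) else 0))"
    by (intro sum.cong refl) (simp add: cform_arm[where r=r and k=k and s=s, OF assms] algebra_simps)
  also have "\<dots> = 2 * x (C i j) - x (C i (j - 1)) - (if j + 1 \<le> s i then x (C i (j + 1)) else 0)"
    using V1 V2 by (simp add: sum.distrib sum_delta_int[OF finite_verts])
  finally show ?thesis .
qed

lemma arm_lemma:
  assumes i: "1 \<le> i" "i \<le> k"
  shows "\<forall>(x::vtx \<Rightarrow> int) j. 1 \<le> j \<longrightarrow> j \<le> s i \<longrightarrow> s i - j = n \<longrightarrow> x (C i (j - 1)) < x (C i j) \<longrightarrow>
    (\<exists>w. set w \<subseteq> verts r k s \<and> act r k s w x (C i 0) = x (C i 0) \<and> (\<exists>m. act r k s w x m < 0))"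
proof (induction n)
  case 0
  show ?case
  proof (intro allI impI)
    fix x :: "vtx \<Rightarrow> int" and j assume j: "1 \<le> j" "j \<le> s i" "s i - j = 0" and lt: "x (C i (j - 1)) < x (C i j)"
    have V: "C i j \<in> verts r k s" using i j unfolding verts_def by auto
    let ?y = "srefl r k s (C i j) x"
    have "?y (C i j) = x (C i (j - 1)) - x (C i j)" using j P_arm[where r=r and k=k and s=s and x=x, OF i j(1,2)] by (simp add: srefl_app evec_app)
    moreover have "?y (C i 0) = x (C i 0)" using j by (simp add: srefl_app evec_app)
    ultimately show "\<exists>w. set w \<subseteq> verts r k s \<and> act r k s w x (C i 0) = x (C i 0) \<and> (\<exists>m. act r k s w x m < 0)"
      using lt V by (intro exI[of _ "[C i j]"]) (auto intro!: exI[of _ "C i j"])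
  qed
next
  case (Suc n)
  show ?case
  proof (intro allI impI)
    fix x :: "vtx \<Rightarrow> int" and j assume j: "1 \<le> j" "j \<le> s i" "s i - j = Suc n" and lt: "x (C i (j - 1)) < x (C i j)"
    have V: "C i j \<in> verts r k s" using i j unfolding verts_def by auto
    define y where "y = srefl r k s (C i j) x"
    have jj: "j + 1 \<le> s i" using j by simp
    have y1: "y (C i j) = x (C i (j - 1)) + x (C i (j + 1)) - x (C i j)"
      using j jj P_arm[where r=r and k=k and s=s and x=x, OF i j(1,2)] by (simp add: y_def srefl_app evec_app)
    have y2: "y (C i (j + 1)) = x (C i (j + 1))" by (simp add: y_def srefl_app evec_app)
    have y0: "y (C i 0) = x (C i 0)" using j by (simp add: y_def srefl_app evec_app)
    have "y (C i (j + 1 - 1)) < y (C i (j + 1))" using y1 y2 lt by simp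
    then obtain w where w: "set w \<subseteq> verts r k s" "act r k s w y (C i 0) = y (C i 0)" "\<exists>m. act r k s w y m < 0"
    proof -
      have "s i - (j + 1) = n" using j by simp
      then show ?thesis using Suc.IH[rule_format, of "j + 1" y] jj \<open>y (C i (j + 1 - 1)) < y (C i (j + 1))\<close> that by auto
    qed
    show "\<exists>w. set w \<subseteq> verts r k s \<and> act r k s w x (C i 0) = x (C i 0) \<and> (\<exists>m. act r k s w x m < 0)"
      using w V y0 by (intro exI[of _ "w @ [C i j]"]) (simp add: act_append y_def)
  qed
qed

theorem lemma2p7:
  fixes r k :: nat and s :: "nat \<Rightarrow> nat" and v :: "vtx \<Rightarrow> int" and i :: nat
  assumes "v \<in> roots r k s"
    and "\<forall>a. 0 \<le> v a"
    and "1 \<le> i" and "i \<le> k"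
    and "v (C i 0) > 0"
  shows "\<forall>j. 1 \<le> j \<and> j \<le> s i \<longrightarrow> v (C i j) \<le> v (C i (j - 1))"
proof (rule ccontr)
  assume "\<not> ?thesis"
  then obtain j where j: "1 \<le> j" "j \<le> s i" "v (C i (j - 1)) < v (C i j)" by force
  obtain wa where wa: "set wa \<subseteq> verts r k s" "act r k s wa v (C i 0) = v (C i 0)" "\<exists>m. act r k s wa v m < 0"
    using arm_lemma[OF assms(3,4), of s "s i - j"] j by blast
  obtain m where m: "act r k s wa v m < 0" using wa(3) by blast
  show False
  proof (cases "v \<in> real_roots r k s")
    case True
    then obtain a where a: "a \<in> verts r k s" "v \<in> weyl_orbit r k s (evec a)" unfolding real_roots_def by blast
    obtain w where w: "set w \<subseteq> verts r k s" "v = act r k s w (evec a)" using orbit_act[OF a(2)] by blast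
    have "act r k s wa v = act r k s (wa @ w) (evec a)" using w by (simp add: act_append)
    then have "(\<forall>x. 0 \<le> act r k s wa v x) \<or> (\<forall>x. act r k s wa v x \<le> 0)"
      using real_pos[of "wa @ w" r k s a] w wa a by simp
    then show False using m wa(2) assms(5) by (metis not_le order_less_le_trans)
  next
    case False
    then have "v \<in> imag_roots r k s" using assms(1) unfolding roots_def by blast
    then obtain d where d: "fundamental_imag r k s d"
      and o: "v \<in> weyl_orbit r k s d \<or> (\<lambda>b. - v b) \<in> weyl_orbit r k s d"
      unfolding imag_roots_def by blast
    have dn: "\<forall>b. 0 \<le> d b" and dp: "\<forall>c\<in>verts r k s. bform r k s d (evec c) \<le> 0"
      using d unfolding fundamental_imag_def by (auto simp: bform_sym)
    from o show False
    proof
      assume "v \<in> weyl_orbit r k s d"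
      then obtain w where w: "set w \<subseteq> verts r k s" "v = act r k s w d" using orbit_act by blast
      have e: "act r k s wa v = act r k s (wa @ w) d" using w by (simp add: act_append)
      have "0 \<le> act r k s (wa @ w) d m" using imag_pos[OF dp dn, of "wa @ w"] w wa by auto
      then show False using m e by simp
    next
      assume "(\<lambda>b. - v b) \<in> weyl_orbit r k s d"
      then obtain w where w: "set w \<subseteq> verts r k s" "(\<lambda>b. - v b) = act r k s w d" using orbit_act by blast
      have "0 \<le> - v (C i 0)" using imag_pos[OF dp dn w(1)] w(2) by (metis)
      then show False using assms(5) by simp
    qed
  qed
qed

end
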